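(* There exists a set $T$ of five terminals in the plane, no two on a common horizontal or vertical line, for which $N_{\varnothing}(T)$ is a bidirected Manhattan network on $T$ but is not of minimum length: its length is $34$, while a bidirected Manhattan network on $T$ of length $32$ exists.
   Context: For points $p,q$, $R(p,q)$ is the smallest closed axis-parallel rectangle containing $p$ and $q$; for terminals ${\bf t}_i,{\bf t}_j\in T$, $R_{i,j}=R({\bf t}_i,{\bf t}_j)$, which is empty if $R_{i,j}\cap T=\{{\bf t}_i,{\bf t}_j\}$. $\Gamma(T)$ is the grid formed by the horizontal and vertical lines through the terminals, restricted to the bounding box of $T$. An oriented subnetwork of $\Gamma(T)$ is a set of edges of $\Gamma(T)$ each directed in exactly one sense; its length is the total length of its edges. A bidirected Manhattan network on $T$ is an oriented subnetwork of $\Gamma(T)$ containing, for every ordered pair of distinct terminals $(t,t')$, a directed path from $t$ to $t'$ of length $|t^x-t'^x|+|t^y-t'^y|$. $N_{\varnothing}(T)$ is the oriented subnetwork consisting of the boundary edges of all empty rectangles $R_{i,j}$, where the boundary of $R_{i,j}$ is oriented clockwise if the segment ${\bf t}_i{\bf t}_j$ has positive slope and counterclockwise if it has negative slope. *)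

theory Defs
  imports Complex_Main
begin

type_synonym point = "real \<times> real"

text \<open>Vertices of the grid Gamma(T): intersections of the horizontal and vertical
lines through the terminals (automatically inside the bounding box of T).\<close>
definition grid_vertices :: "point set \<Rightarrow> point set" where
  "grid_vertices T = fst ` T \<times> snd ` T"

definition grid_edge :: "point set \<Rightarrow> point \<Rightarrow> point \<Rightarrow> bool" where
  "grid_edge T u v \<longleftrightarrow> u \<in> grid_vertices T \<and> v \<in> grid_vertices T \<and> u \<noteq> v \<and>
     ((snd u = snd v \<and> \<not> (\<exists>x\<in>fst ` T. min (fst u) (fst v) < x \<and> x < max (fst u) (fst v))) \<or>
      (fst u = fst v \<and> \<not> (\<exists>y\<in>snd ` T. min (snd u) (snd v) < y \<and> y < max (snd u) (snd v))))"

definition oriented_subnetwork :: "point set \<Rightarrow> (point \<times> point) set \<Rightarrow> bool" where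
  "oriented_subnetwork T N \<longleftrightarrow>
     (\<forall>(u, v)\<in>N. grid_edge T u v) \<and> (\<forall>(u, v)\<in>N. (v, u) \<notin> N)"

definition l1dist :: "point \<Rightarrow> point \<Rightarrow> real" where
  "l1dist p q = \<bar>fst p - fst q\<bar> + \<bar>snd p - snd q\<bar>"

definition edge_len :: "point \<times> point \<Rightarrow> real" where
  "edge_len e = l1dist (fst e) (snd e)"

definition net_length :: "(point \<times> point) set \<Rightarrow> real" where
  "net_length N = (\<Sum>e\<in>N. edge_len e)"

definition is_dpath :: "(point \<times> point) set \<Rightarrow> point \<Rightarrow> point \<Rightarrow> point list \<Rightarrow> bool" where
  "is_dpath N s t ps \<longleftrightarrow> ps \<noteq> [] \<and> hd ps = s \<and> last ps = t \<and>
     (\<forall>e\<in>set (zip ps (tl ps)). e \<in> N)"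

definition path_len :: "point list \<Rightarrow> real" where
  "path_len ps = sum_list (map edge_len (zip ps (tl ps)))"

definition bidirected_manhattan :: "point set \<Rightarrow> (point \<times> point) set \<Rightarrow> bool" where
  "bidirected_manhattan T N \<longleftrightarrow> oriented_subnetwork T N \<and>
     (\<forall>t\<in>T. \<forall>t'\<in>T. t \<noteq> t' \<longrightarrow> (\<exists>ps. is_dpath N t t' ps \<and> path_len ps = l1dist t t'))"

definition rect :: "point \<Rightarrow> point \<Rightarrow> point set" where
  "rect p q = {z. min (fst p) (fst q) \<le> fst z \<and> fst z \<le> max (fst p) (fst q) \<and>
                  min (snd p) (snd q) \<le> snd z \<and> snd z \<le> max (snd p) (snd q)}"

definition empty_rect :: "point set \<Rightarrow> point \<Rightarrow> point \<Rightarrow> bool" where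
  "empty_rect T p q \<longleftrightarrow> rect p q \<inter> T = {p, q}"

text \<open>Directed grid edges on the boundary of R(p,q), oriented clockwise
(standard orientation, y axis pointing up): top side left to right, right side
downwards, bottom side right to left, left side upwards.\<close>
definition cw_boundary :: "point set \<Rightarrow> point \<Rightarrow> point \<Rightarrow> (point \<times> point) set" where
  "cw_boundary T p q =
    (let x1 = min (fst p) (fst q); x2 = max (fst p) (fst q);
         y1 = min (snd p) (snd q); y2 = max (snd p) (snd q) in
     {(u, v). grid_edge T u v \<and>
       ((snd u = y2 \<and> snd v = y2 \<and> x1 \<le> fst u \<and> fst u < fst v \<and> fst v \<le> x2) \<or>
        (fst u = x2 \<and> fst v = x2 \<and> y1 \<le> snd v \<and> snd v < snd u \<and> snd u \<le> y2) \<or>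
        (snd u = y1 \<and> snd v = y1 \<and> x1 \<le> fst v \<and> fst v < fst u \<and> fst u \<le> x2) \<or>
        (fst u = x1 \<and> fst v = x1 \<and> y1 \<le> snd u \<and> snd u < snd v \<and> snd v \<le> y2))})"

definition ccw_boundary :: "point set \<Rightarrow> point \<Rightarrow> point \<Rightarrow> (point \<times> point) set" where
  "ccw_boundary T p q = {(v, u) | u v. (u, v) \<in> cw_boundary T p q}"

definition oriented_boundary :: "point set \<Rightarrow> point \<Rightarrow> point \<Rightarrow> (point \<times> point) set" where
  "oriented_boundary T p q =
     (if (fst q - fst p) * (snd q - snd p) > 0 then cw_boundary T p q
      else if (fst q - fst p) * (snd q - snd p) < 0 then ccw_boundary T p q
      else {})"

definition N_empty :: "point set \<Rightarrow> (point \<times> point) set" where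
  "N_empty T = (\<Union>p\<in>T. \<Union>q\<in>T. if p \<noteq> q \<and> empty_rect T p q then oriented_boundary T p q else {})"

end

theory Submission
  imports Defs
begin

definition TT :: "point set" where "TT = {(0,1),(1,0),(2,3),(3,4),(4,2)}"

definition gadj :: "point \<Rightarrow> point \<Rightarrow> bool" where
  "gadj u v \<longleftrightarrow> (snd u = snd v \<and> \<bar>fst u - fst v\<bar> = 1) \<or> (fst u = fst v \<and> \<bar>snd u - snd v\<bar> = 1)"

definition GL :: "point list" where
  "GL = [(x,y). x \<leftarrow> [0,1,2,3,4], y \<leftarrow> [0,1,2,3,4]]"

definition EL :: "(point \<times> point) list" where
  "EL = [(u,v). u \<leftarrow> GL, v \<leftarrow> GL, gadj u v]"

definition ELx :: "(point \<times> point) list" where "ELx = [((0,0),(0,1)), ((0,0),(1,0)), ((0,1),(0,0)), ((0,1),(0,2)), ((0,1),(1,1)), ((0,2),(0,1)), ((0,2),(0,3)), ((0,2),(1,2)), ((0,3),(0,2)), ((0,3),(0,4)), ((0,3),(1,3)), ((0,4),(0,3)), ((0,4),(1,4)), ((1,0),(0,0)), ((1,0),(1,1)), ((1,0),(2,0)), ((1,1),(0,1)), ((1,1),(1,0)), ((1,1),(1,2)), ((1,1),(2,1)), ((1,2),(0,2)), ((1,2),(1,1)), ((1,2),(1,3)), ((1,2),(2,2)), ((1,3),(0,3)), ((1,3),(1,2)), ((1,3),(1,4)), ((1,3),(2,3)), ((1,4),(0,4)), ((1,4),(1,3)), ((1,4),(2,4)), ((2,0),(1,0)), ((2,0),(2,1)),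 ((2,0),(3,0)), ((2,1),(1,1)), ((2,1),(2,0)), ((2,1),(2,2)), ((2,1),(3,1)), ((2,2),(1,2)), ((2,2),(2,1)), ((2,2),(2,3)), ((2,2),(3,2)), ((2,3),(1,3)), ((2,3),(2,2)), ((2,3),(2,4)), ((2,3),(3,3)), ((2,4),(1,4)), ((2,4),(2,3)), ((2,4),(3,4)), ((3,0),(2,0)), ((3,0),(3,1)), ((3,0),(4,0)), ((3,1),(2,1)), ((3,1),(3,0)), ((3,1),(3,2)), ((3,1),(4,1)), ((3,2),(2,2)), ((3,2),(3,1)), ((3,2),(3,3)), ((3,2),(4,2)), ((3,3),(2,3)), ((3,3),(3,2)), ((3,3),(3,4)), ((3,3),(4,3)), ((3,4),(2,4)), ((3,4),(3,3)), ((3,4),(4,4)), ((4,0),(3,0)), ((4,0),(4,1)), ((4,1),(3,1)), ((4,1),(4,0)), ((4,1),(4,2)), ((4,2),(3,2)), ((4,2),(4,1)), ((4,2),(4,3)), ((4,3),(3,3)), ((4,3),(4,2)), ((4,3),(4,4)), ((4,4),(3,4)), ((4,4),(4,3))]"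

definition NL :: "(point \<times> point) list" where "NL = [((0,0),(1,0)), ((0,1),(0,0)), ((0,1),(0,2)), ((0,2),(0,3)), ((0,2),(1,2)), ((0,3),(1,3)), ((1,0),(1,1)), ((1,1),(0,1)), ((1,1),(1,2)), ((1,2),(1,3)), ((1,2),(2,2)), ((1,3),(2,3)), ((2,0),(1,0)), ((2,1),(1,1)), ((2,1),(2,0)), ((2,2),(2,1)), ((2,2),(3,2)), ((2,3),(2,2)), ((2,3),(2,4)), ((2,4),(3,4)), ((3,0),(2,0)), ((3,1),(2,1)), ((3,2),(4,2)), ((3,3),(2,3)), ((3,3),(3,2)), ((3,4),(3,3)), ((4,0),(3,0)), ((4,1),(3,1)), ((4,1),(4,0)), ((4,2),(4,1)), ((4,2),(4,3)), ((4,3),(3,3)), ((4,3),(4,4)), ((4,4),(3,4))]"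

definition NL32 :: "(point \<times> point) list" where "NL32 = [((0,0),(1,0)), ((0,1),(0,0)), ((0,1),(0,2)), ((0,2),(0,3)), ((0,2),(1,2)), ((0,3),(1,3)), ((1,0),(1,1)), ((1,1),(0,1)), ((1,1),(1,2)), ((1,2),(1,3)), ((1,2),(2,2)), ((1,3),(2,3)), ((2,0),(1,0)), ((2,1),(1,1)), ((2,1),(2,0)), ((2,2),(2,1)), ((2,2),(3,2)), ((2,3),(2,2)), ((2,3),(2,4)), ((2,4),(3,4)), ((3,0),(2,0)), ((3,1),(2,1)), ((3,2),(4,2)), ((3,3),(2,3)), ((3,3),(3,2)), ((3,4),(3,3)), ((4,1),(3,1)), ((4,2),(4,1)), ((4,2),(4,3)), ((4,3),(3,3)), ((4,3),(4,4)), ((4,4),(3,4))]"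

definition PL :: "(point \<times> point \<times> point list) list" where "PL = [((0,1),(1,0),[(0,1),(0,0),(1,0)]), ((0,1),(2,3),[(0,1),(0,2),(0,3),(1,3),(2,3)]), ((0,1),(3,4),[(0,1),(0,2),(0,3),(1,3),(2,3),(2,4),(3,4)]), ((0,1),(4,2),[(0,1),(0,2),(1,2),(2,2),(3,2),(4,2)]), ((1,0),(0,1),[(1,0),(1,1),(0,1)]), ((1,0),(2,3),[(1,0),(1,1),(1,2),(1,3),(2,3)]), ((1,0),(3,4),[(1,0),(1,1),(1,2),(1,3),(2,3),(2,4),(3,4)]), ((1,0),(4,2),[(1,0),(1,1),(1,2),(2,2),(3,2),(4,2)]), ((2,3),(0,1),[(2,3),(2,2),(2,1),(1,1),(0,1)]), ((2,3),(1,0),[(2,3),(2,2),(2,1),(2,0),(1,0)]), ((2,3),(3,4),[(2,3),(2,4),(3,4)]), ((2,3),(4,2),[(2,3),(2,2),(3,2),(4,2)]), ((3,4),(0,1),[(3,4),(3,3),(2,3),(2,2),(2,1),(1,1),(0,1)]), ((3,4),(1,0),[(3,4),(3,3),(2,3),(2,2),(2,1),(2,0),(1,0)]), ((3,4),(2,3),[(3,4),(3,3),(2,3)]), ((3,4),(4,2),[(3,4),(3,3),(3,2),(4,2)]), ((4,2),(0,1),[(4,2),(4,1),(3,1),(2,1),(1,1),(0,1)]), ((4,2),(1,0),[(4,2),(4,1),(3,1),(2,1),(2,0),(1,0)]), ((4,2),(2,3),[(4,2),(4,3),(3,3),(2,3)]), ((4,2),(3,4),[(4,2),(4,3),(4,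4),(3,4)])]"

lemma EL_eq: "EL = ELx"
  by (simp add: EL_def GL_def ELx_def gadj_def)

lemma fstT: "fst ` TT = {0,1,2,3,4}" by (auto simp: TT_def)
lemma sndT: "snd ` TT = {0,1,2,3,4}" by (auto simp: TT_def)

lemma adj2:
  fixes a b :: real
  assumes "a \<in> {0,1,2,3,4}" "b \<in> {0,1,2,3,4}"
  shows "(a \<noteq> b \<and> \<not>(\<exists>x\<in>{0,1,2,3,4::real}. min a b < x \<and> x < max a b)) \<longleftrightarrow> \<bar>a-b\<bar> = 1"
  using assms by (simp only: insert_iff empty_iff) (elim disjE; simp)

lemma setGL: "set GL = {0,1,2,3,4} \<times> {0,1,2,3,4}"
  by (auto simp: GL_def)

lemma setEL: "set EL = {(u,v). u \<in> {0,1,2,3,4} \<times> {0,1,2,3,4} \<and> v \<in> {0,1,2,3,4} \<times> {0,1,2,3,4} \<and> gadj u v}"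
  unfolding EL_def setGL[symmetric] by auto

lemma gen: "((a,b)\<in>A\<times>B \<and> (c,d)\<in>A\<times>B \<and> (a,b)\<noteq>(c,d) \<and> ((b=d \<and> \<not>P) \<or> (a=c \<and> \<not>Q))) \<longleftrightarrow>
   (a\<in>A \<and> b\<in>B \<and> c\<in>A \<and> d\<in>B \<and> ((b=d \<and> a\<noteq>c \<and> \<not>P) \<or> (a=c \<and> b\<noteq>d \<and> \<not>Q)))"
  by auto

lemma GE: "grid_edge TT u v \<longleftrightarrow> (u,v) \<in> set EL"
proof -
  obtain a b c d where u: "u = (a,b)" and v: "v = (c,d)" by (cases u, cases v) auto
  have "grid_edge TT u v \<longleftrightarrow> a \<in> {0,1,2,3,4} \<and> b \<in> {0,1,2,3,4} \<and> c \<in> {0,1,2,3,4} \<and> d \<in> {0,1,2,3,4} \<and>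
     ((b = d \<and> (a \<noteq> c \<and> \<not>(\<exists>x\<in>{0,1,2,3,4::real}. min a c < x \<and> x < max a c))) \<or>
      (a = c \<and> (b \<noteq> d \<and> \<not>(\<exists>x\<in>{0,1,2,3,4::real}. min b d < x \<and> x < max b d))))"
    unfolding grid_edge_def grid_vertices_def fstT sndT u v fst_conv snd_conv by (rule gen)
  also have "\<dots> \<longleftrightarrow> a \<in> {0,1,2,3,4} \<and> b \<in> {0,1,2,3,4} \<and> c \<in> {0,1,2,3,4} \<and> d \<in> {0,1,2,3,4} \<and>
     ((b = d \<and> \<bar>a-c\<bar> = 1) \<or> (a = c \<and> \<bar>b-d\<bar> = 1))"
    by (intro conj_cong refl) (simp only: adj2)
  also have "\<dots> \<longleftrightarrow> (u,v) \<in> set EL"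
    unfolding setEL u v gadj_def by (simp only: mem_Collect_eq prod.case mem_Times_iff fst_conv snd_conv conj_assoc)
  finally show ?thesis .
qed

definition cwc :: "point \<Rightarrow> point \<Rightarrow> point \<Rightarrow> point \<Rightarrow> bool" where
  "cwc p q u v \<longleftrightarrow>
    (let x1 = min (fst p) (fst q); x2 = max (fst p) (fst q);
         y1 = min (snd p) (snd q); y2 = max (snd p) (snd q) in
       ((snd u = y2 \<and> snd v = y2 \<and> x1 \<le> fst u \<and> fst u < fst v \<and> fst v \<le> x2) \<or>
        (fst u = x2 \<and> fst v = x2 \<and> y1 \<le> snd v \<and> snd v < snd u \<and> snd u \<le> y2) \<or>
        (snd u = y1 \<and> snd v = y1 \<and> x1 \<le> fst v \<and> fst v < fst u \<and> fst u \<le> x2) \<or>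
        (fst u = x1 \<and> fst v = x1 \<and> y1 \<le> snd u \<and> snd u < snd v \<and> snd v \<le> y2)))"

lemma cwb: "cw_boundary TT p q = set (filter (\<lambda>e. cwc p q (fst e) (snd e)) EL)"
proof -
  have "cw_boundary TT p q = {(u,v). grid_edge TT u v \<and> cwc p q u v}"
    by (simp only: cw_boundary_def cwc_def Let_def)
  also have "\<dots> = set (filter (\<lambda>e. cwc p q (fst e) (snd e)) EL)"
    unfolding GE by auto
  finally show ?thesis .
qed

lemma ccwb: "ccw_boundary TT p q = set (map prod.swap (filter (\<lambda>e. cwc p q (fst e) (snd e)) EL))"
  unfolding ccw_boundary_def cwb by force

definition obl :: "point \<Rightarrow> point \<Rightarrow> (point \<times> point) list" where
  "obl p q = (if (fst q - fst p) * (snd q - snd p) > 0 then filter (\<lambda>e. cwc p q (fst e) (snd e)) EL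
      else if (fst q - fst p) * (snd q - snd p) < 0 then map prod.swap (filter (\<lambda>e. cwc p q (fst e) (snd e)) EL)
      else [])"

lemma OB: "oriented_boundary TT p q = set (obl p q)"
  unfolding oriented_boundary_def obl_def cwb ccwb by simp

lemma er: "p \<in> T \<Longrightarrow> q \<in> T \<Longrightarrow> empty_rect T p q \<longleftrightarrow> (\<forall>r\<in>T. r \<in> rect p q \<longrightarrow> r = p \<or> r = q)"
  unfolding empty_rect_def rect_def by auto

lemma NEs: "N_empty TT = (\<Union>p\<in>TT. \<Union>q\<in>TT. if p \<noteq> q \<and> (\<forall>r\<in>TT. r \<in> rect p q \<longrightarrow> r = p \<or> r = q) then set (obl p q) else {})"
  unfolding N_empty_def OB by (intro SUP_cong refl) (simp add: er)

lemma obl0: "obl (0,1) (1,0) = [((0,1),(0,0)), ((1,1),(0,1)), ((0,0),(1,0)), ((1,0),(1,1))]"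
  by (simp add: obl_def cwc_def EL_eq ELx_def)

lemma obl1: "obl (0,1) (2,3) = [((0,1),(0,2)), ((0,2),(0,3)), ((0,3),(1,3)), ((1,1),(0,1)), ((1,3),(2,3)), ((2,1),(1,1)), ((2,2),(2,1)), ((2,3),(2,2))]"
  by (simp add: obl_def cwc_def EL_eq ELx_def)

lemma obl2: "obl (0,1) (4,2) = [((0,1),(0,2)), ((0,2),(1,2)), ((1,1),(0,1)), ((1,2),(2,2)), ((2,1),(1,1)), ((2,2),(3,2)), ((3,1),(2,1)), ((3,2),(4,2)), ((4,1),(3,1)), ((4,2),(4,1))]"
  by (simp add: obl_def cwc_def EL_eq ELx_def)

lemma obl3: "obl (1,0) (0,1) = [((0,1),(0,0)), ((1,1),(0,1)), ((0,0),(1,0)), ((1,0),(1,1))]"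
  by (simp add: obl_def cwc_def EL_eq ELx_def)

lemma obl4: "obl (1,0) (2,3) = [((1,0),(1,1)), ((1,1),(1,2)), ((1,2),(1,3)), ((1,3),(2,3)), ((2,0),(1,0)), ((2,1),(2,0)), ((2,2),(2,1)), ((2,3),(2,2))]"
  by (simp add: obl_def cwc_def EL_eq ELx_def)

lemma obl5: "obl (1,0) (4,2) = [((1,0),(1,1)), ((1,1),(1,2)), ((1,2),(2,2)), ((2,0),(1,0)), ((2,2),(3,2)), ((3,0),(2,0)), ((3,2),(4,2)), ((4,0),(3,0)), ((4,1),(4,0)), ((4,2),(4,1))]"
  by (simp add: obl_def cwc_def EL_eq ELx_def)

lemma obl6: "obl (2,3) (0,1) = [((0,1),(0,2)), ((0,2),(0,3)), ((0,3),(1,3)), ((1,1),(0,1)), ((1,3),(2,3)), ((2,1),(1,1)), ((2,2),(2,1)), ((2,3),(2,2))]"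
  by (simp add: obl_def cwc_def EL_eq ELx_def)

lemma obl7: "obl (2,3) (1,0) = [((1,0),(1,1)), ((1,1),(1,2)), ((1,2),(1,3)), ((1,3),(2,3)), ((2,0),(1,0)), ((2,1),(2,0)), ((2,2),(2,1)), ((2,3),(2,2))]"
  by (simp add: obl_def cwc_def EL_eq ELx_def)

lemma obl8: "obl (2,3) (3,4) = [((2,3),(2,4)), ((2,4),(3,4)), ((3,3),(2,3)), ((3,4),(3,3))]"
  by (simp add: obl_def cwc_def EL_eq ELx_def)

lemma obl9: "obl (2,3) (4,2) = [((2,3),(2,2)), ((3,3),(2,3)), ((2,2),(3,2)), ((4,3),(3,3)), ((3,2),(4,2)), ((4,2),(4,3))]"
  by (simp add: obl_def cwc_def EL_eq ELx_def)

lemma obl10: "obl (3,4) (2,3) = [((2,3),(2,4)), ((2,4),(3,4)), ((3,3),(2,3)), ((3,4),(3,3))]"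
  by (simp add: obl_def cwc_def EL_eq ELx_def)

lemma obl11: "obl (3,4) (4,2) = [((3,3),(3,2)), ((3,4),(3,3)), ((4,4),(3,4)), ((3,2),(4,2)), ((4,2),(4,3)), ((4,3),(4,4))]"
  by (simp add: obl_def cwc_def EL_eq ELx_def)

lemma obl12: "obl (4,2) (0,1) = [((0,1),(0,2)), ((0,2),(1,2)), ((1,1),(0,1)), ((1,2),(2,2)), ((2,1),(1,1)), ((2,2),(3,2)), ((3,1),(2,1)), ((3,2),(4,2)), ((4,1),(3,1)), ((4,2),(4,1))]"
  by (simp add: obl_def cwc_def EL_eq ELx_def)

lemma obl13: "obl (4,2) (1,0) = [((1,0),(1,1)), ((1,1),(1,2)), ((1,2),(2,2)), ((2,0),(1,0)), ((2,2),(3,2)), ((3,0),(2,0)), ((3,2),(4,2)), ((4,0),(3,0)), ((4,1),(4,0)), ((4,2),(4,1))]"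
  by (simp add: obl_def cwc_def EL_eq ELx_def)

lemma obl14: "obl (4,2) (2,3) = [((2,3),(2,2)), ((3,3),(2,3)), ((2,2),(3,2)), ((4,3),(3,3)), ((3,2),(4,2)), ((4,2),(4,3))]"
  by (simp add: obl_def cwc_def EL_eq ELx_def)

lemma obl15: "obl (4,2) (3,4) = [((3,3),(3,2)), ((3,4),(3,3)), ((4,4),(3,4)), ((3,2),(4,2)), ((4,2),(4,3)), ((4,3),(4,4))]"
  by (simp add: obl_def cwc_def EL_eq ELx_def)

definition EP :: "(point \<times> point) list" where "EP = [((0,1),(1,0)), ((0,1),(2,3)), ((0,1),(4,2)), ((1,0),(0,1)), ((1,0),(2,3)), ((1,0),(4,2)), ((2,3),(0,1)), ((2,3),(1,0)), ((2,3),(3,4)), ((2,3),(4,2)), ((3,4),(2,3)), ((3,4),(4,2)), ((4,2),(0,1)), ((4,2),(1,0)), ((4,2),(2,3)), ((4,2),(3,4))]"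

lemma NE2: "N_empty TT = (\<Union>e\<in>set EP. set (obl (fst e) (snd e)))"
  unfolding NEs unfolding TT_def EP_def by (simp add: rect_def Un_assoc)

lemma NE: "N_empty TT = set NL"
proof (rule equalityI)
  show "N_empty TT \<subseteq> set NL"
    unfolding NE2 EP_def by (simp add: obl0 obl1 obl2 obl3 obl4 obl5 obl6 obl7 obl8 obl9 obl10 obl11 obl12 obl13 obl14 obl15 NL_def)
  show "set NL \<subseteq> N_empty TT"
    unfolding NE2 EP_def by (simp add: obl0 obl1 obl2 obl3 obl4 obl5 obl6 obl7 obl8 obl9 obl10 obl11 obl12 obl13 obl14 obl15 NL_def)
qed

lemma dpath_mono: "N \<subseteq> N' \<Longrightarrow> is_dpath N s t ps \<Longrightarrow> is_dpath N' s t ps"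
  unfolding is_dpath_def by blast

lemma PLok: "\<forall>(s,t,ps)\<in>set PL. is_dpath (set NL32) s t ps \<and> path_len ps = l1dist s t"
  by (simp add: PL_def NL32_def is_dpath_def path_len_def edge_len_def l1dist_def)

lemma PLcov: "\<forall>t\<in>TT. \<forall>t'\<in>TT. t \<noteq> t' \<longrightarrow> (\<exists>ps. (t,t',ps) \<in> set PL)"
  by (simp add: TT_def PL_def)

lemma sub32: "set NL32 \<subseteq> set NL"
  by (simp add: NL32_def NL_def)

lemma paths32: "\<forall>t\<in>TT. \<forall>t'\<in>TT. t \<noteq> t' \<longrightarrow> (\<exists>ps. is_dpath (set NL32) t t' ps \<and> path_len ps = l1dist t t')"
  using PLok PLcov by fastforce

lemma or32: "oriented_subnetwork TT (set NL32)"
  unfolding oriented_subnetwork_def GE EL_eq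
  by (simp add: NL32_def ELx_def)

lemma or34: "oriented_subnetwork TT (set NL)"
  unfolding oriented_subnetwork_def GE EL_eq
  by (simp add: NL_def ELx_def)

lemma bm32: "bidirected_manhattan TT (set NL32)"
  unfolding bidirected_manhattan_def using or32 paths32 by blast

lemma bm34: "bidirected_manhattan TT (set NL)"
  unfolding bidirected_manhattan_def using or34 paths32 dpath_mono[OF sub32] by blast

lemma len34: "net_length (set NL) = 34"
proof -
  have "distinct NL" by (simp add: NL_def)
  then have "net_length (set NL) = sum_list (map edge_len NL)"
    unfolding net_length_def by (simp add: sum_list_distinct_conv_sum_set)
  also have "\<dots> = 34" by (simp add: NL_def edge_len_def l1dist_def)
  finally show ?thesis .
qed

lemma len32: "net_length (set NL32) = 32"
proof -
  have "distinct NL32" by (simp add: NL32_def)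
  then have "net_length (set NL32) = sum_list (map edge_len NL32)"
    unfolding net_length_def by (simp add: sum_list_distinct_conv_sum_set)
  also have "\<dots> = 32" by (simp add: NL32_def edge_len_def l1dist_def)
  finally show ?thesis .
qed

theorem mainTheorem6:
  shows "\<exists>T :: point set. finite T \<and> card T = 5 \<and>
     (\<forall>p\<in>T. \<forall>q\<in>T. p \<noteq> q \<longrightarrow> fst p \<noteq> fst q \<and> snd p \<noteq> snd q) \<and>
     bidirected_manhattan T (N_empty T) \<and> net_length (N_empty T) = 34 \<and>
     (\<exists>N. bidirected_manhattan T N \<and> net_length N = 32)"
proof (intro exI[of _ TT] conjI)
  show "finite TT" by (simp add: TT_def)
  show "card TT = 5" by (simp add: TT_def)
  show "\<forall>p\<in>TT. \<forall>q\<in>TT. p \<noteq> q \<longrightarrow> fst p \<noteq> fst q \<and> snd p \<noteq> snd q" by (simp add: TT_def)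
  show "bidirected_manhattan TT (N_empty TT)" using bm34 by (simp add: NE)
  show "net_length (N_empty TT) = 34" using len34 by (simp add: NE)
  show "\<exists>N. bidirected_manhattan TT N \<and> net_length N = 32" using bm32 len32 by blast
qed

end
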